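(* Let $G$ be an antimatroid on a ground set $S$ with $|S|=n$, and write its Tutte polynomial as $T(G;x,y)=\sum_{i,j}b_{i,j}x^iy^j$. For $i,j\ge0$ let $a_{i,j}$ be the number of convex sets $C$ of $G$ with $|C|=i$ and $|\mathrm{int}(C)|=j$. Then $$b_{i,j}=\sum_{s=i}^{n}(-1)^{s-i}\binom{s}{i}a_{s,j}.$$
   Context: An antimatroid on a finite set $S$ is a family $\mathcal{F}\subseteq 2^S$ of feasible sets with $\emptyset\in\mathcal{F}$, $S\in\mathcal{F}$, $F_1\cup F_2\in\mathcal{F}$ whenever $F_1,F_2\in\mathcal{F}$, and accessible: every nonempty $F\in\mathcal{F}$ contains some $x$ with $F\setminus\{x\}\in\mathcal{F}$. Its rank function is $r(A)=\max\{|F|:F\in\mathcal{F},F\subseteq A\}$ (so $r(S)=|S|$), and its Tutte polynomial is $T(G;x,y)=\sum_{A\subseteq S}(x-1)^{r(S)-r(A)}(y-1)^{|A|-r(A)}$. A set $C$ is convex if $S\setminus C\in\mathcal{F}$; convex sets are closed under intersection, and the convex closure $\overline{A}$ of $A$ is the smallest convex set containing $A$. For convex $C$, $p\in C$ is extreme if $p\notin\overline{C\setminus\{p\}}$; $\mathrm{int}(C)$ is the set of non-extreme points of $C$. *)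

theory Defs
  imports "HOL-Computational_Algebra.Polynomial"
begin

definition antimatroid :: "'a set \<Rightarrow> 'a set set \<Rightarrow> bool" where
  "antimatroid S \<F> \<longleftrightarrow> finite S \<and> \<F> \<subseteq> Pow S \<and> {} \<in> \<F> \<and> S \<in> \<F> \<and>
     (\<forall>F1\<in>\<F>. \<forall>F2\<in>\<F>. F1 \<union> F2 \<in> \<F>) \<and>
     (\<forall>F\<in>\<F>. F \<noteq> {} \<longrightarrow> (\<exists>x\<in>F. F - {x} \<in> \<F>))"

definition am_rank :: "'a set set \<Rightarrow> 'a set \<Rightarrow> nat" where
  "am_rank \<F> A = Max {card F | F. F \<in> \<F> \<and> F \<subseteq> A}"

text \<open>Tutte polynomial as a bivariate integer polynomial: an outer polynomial in x
  whose coefficients are polynomials in y.\<close>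
definition tutte_X :: "int poly poly" where "tutte_X = monom 1 1"
definition tutte_Y :: "int poly poly" where "tutte_Y = [: [:0, 1:] :]"

definition tutte_poly :: "'a set \<Rightarrow> 'a set set \<Rightarrow> int poly poly" where
  "tutte_poly S \<F> = (\<Sum>A\<in>Pow S. (tutte_X - 1) ^ (am_rank \<F> S - am_rank \<F> A)
                                   * (tutte_Y - 1) ^ (card A - am_rank \<F> A))"

definition tutte_coeff :: "'a set \<Rightarrow> 'a set set \<Rightarrow> nat \<Rightarrow> nat \<Rightarrow> int" where
  "tutte_coeff S \<F> i j = coeff (coeff (tutte_poly S \<F>) i) j"

definition convex :: "'a set \<Rightarrow> 'a set set \<Rightarrow> 'a set \<Rightarrow> bool" where
  "convex S \<F> C \<longleftrightarrow> C \<subseteq> S \<and> S - C \<in> \<F>"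

definition conv_closure :: "'a set \<Rightarrow> 'a set set \<Rightarrow> 'a set \<Rightarrow> 'a set" where
  "conv_closure S \<F> A = \<Inter>{D. convex S \<F> D \<and> A \<subseteq> D}"

definition extreme :: "'a set \<Rightarrow> 'a set set \<Rightarrow> 'a set \<Rightarrow> 'a \<Rightarrow> bool" where
  "extreme S \<F> C p \<longleftrightarrow> p \<in> C \<and> p \<notin> conv_closure S \<F> (C - {p})"

definition conv_int :: "'a set \<Rightarrow> 'a set set \<Rightarrow> 'a set \<Rightarrow> 'a set" where
  "conv_int S \<F> C = {p \<in> C. \<not> extreme S \<F> C p}"

definition count_convex :: "'a set \<Rightarrow> 'a set set \<Rightarrow> nat \<Rightarrow> nat \<Rightarrow> nat" where
  "count_convex S \<F> i j = card {C. convex S \<F> C \<and> card C = i \<and> card (conv_int S \<F> C) = j}"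

end

theory Submission
  imports Defs
begin

lemma am_basic:
  assumes "antimatroid S \<F>"
  shows "finite S" "\<F> \<subseteq> Pow S" "{} \<in> \<F>" "S \<in> \<F>"
    "\<And>F1 F2. F1 \<in> \<F> \<Longrightarrow> F2 \<in> \<F> \<Longrightarrow> F1 \<union> F2 \<in> \<F>"
    "\<And>F. F \<in> \<F> \<Longrightarrow> F \<noteq> {} \<Longrightarrow> \<exists>x\<in>F. F - {x} \<in> \<F>"
    "finite \<F>"
  using assms unfolding antimatroid_def
  by (auto intro: finite_subset[of _ "Pow S"])

lemma am_aug:
  assumes am: "antimatroid S \<F>" and F: "F \<in> \<F>"
  shows "F' \<in> \<F> \<Longrightarrow> \<not> F' \<subseteq> F \<Longrightarrow> \<exists>x\<in>F'-F. insert x F \<in> \<F>"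
proof (induction "card F'" arbitrary: F' rule: less_induct)
  case less
  have fin: "finite F'" using am_basic[OF am] less.prems by (meson PowD finite_subset subsetD)
  have "F' \<noteq> {}" using less.prems by auto
  then obtain y where y: "y \<in> F'" "F' - {y} \<in> \<F>" using am_basic(6)[OF am less.prems(1)] by auto
  show ?case
  proof (cases "F' - {y} \<subseteq> F")
    case True
    then have "y \<notin> F" using less.prems by auto
    moreover have "insert y F = F \<union> F'" using True y by auto
    ultimately show ?thesis using y am_basic(5)[OF am F less.prems(1)] by (intro bexI[of _ y]) auto
  next
    case False
    have "card (F' - {y}) < card F'" using fin y by (meson card_Diff1_less)
    from less.hyps[OF this y(2) False] show ?thesis by auto
  qed
qed

definition ker :: "'a set set \<Rightarrow> 'a set \<Rightarrow> 'a set" where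
  "ker \<F> A = \<Union>{F\<in>\<F>. F \<subseteq> A}"

lemma union_closed:
  assumes am: "antimatroid S \<F>" and "finite G" "G \<subseteq> \<F>"
  shows "\<Union>G \<in> \<F>"
  using assms(2,3)
proof (induction G rule: finite_induct)
  case empty then show ?case using am_basic[OF am] by simp
next
  case (insert x G) then show ?case using am_basic(5)[OF am] by auto
qed

lemma ker_in:
  assumes am: "antimatroid S \<F>"
  shows "ker \<F> A \<in> \<F>" "ker \<F> A \<subseteq> A" "\<And>F. F \<in> \<F> \<Longrightarrow> F \<subseteq> A \<Longrightarrow> F \<subseteq> ker \<F> A"
    "ker \<F> A \<subseteq> S"
proof -
  show "ker \<F> A \<in> \<F>" unfolding ker_def
    by (rule union_closed[OF am]) (use am_basic(7)[OF am] in auto)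
  then show "ker \<F> A \<subseteq> S" using am_basic(2)[OF am] by auto
qed (auto simp: ker_def)

lemma rank_ker:
  assumes am: "antimatroid S \<F>"
  shows "am_rank \<F> A = card (ker \<F> A)"
  unfolding am_rank_def
proof (rule Max_eqI)
  have "{card F |F. F \<in> \<F> \<and> F \<subseteq> A} = card ` {F\<in>\<F>. F \<subseteq> A}" by auto
  then show "finite {card F |F. F \<in> \<F> \<and> F \<subseteq> A}" using am_basic(7)[OF am] by simp
  show "card (ker \<F> A) \<in> {card F |F. F \<in> \<F> \<and> F \<subseteq> A}" using ker_in[OF am] by blast
  fix y assume "y \<in> {card F |F. F \<in> \<F> \<and> F \<subseteq> A}"
  then obtain F where "y = card F" "F \<in> \<F>" "F \<subseteq> A" by auto
  moreover have "finite (ker \<F> A)" using ker_in(4)[OF am] am_basic(1)[OF am] finite_subset by blast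
  ultimately show "y \<le> card (ker \<F> A)" using ker_in(3)[OF am] by (simp add: card_mono)
qed

lemma rank_S:
  assumes am: "antimatroid S \<F>"
  shows "am_rank \<F> S = card S"
proof -
  have "ker \<F> S = S" using ker_in[OF am, of S] am_basic(4)[OF am] by auto
  then show ?thesis using rank_ker[OF am] by simp
qed

lemma extreme_iff:
  assumes am: "antimatroid S \<F>" and F: "F \<in> \<F>" and x: "x \<in> S - F"
  shows "extreme S \<F> (S - F) x \<longleftrightarrow> insert x F \<in> \<F>"
proof -
  have FS: "F \<subseteq> S" using F am_basic(2)[OF am] by auto
  have eq: "S - (S - F - {x}) = insert x F" using FS x by auto
  show ?thesis
  proof
    assume "insert x F \<in> \<F>"
    then have "convex S \<F> (S - F - {x})" unfolding convex_def using eq by auto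
    then have "conv_closure S \<F> (S - F - {x}) \<subseteq> S - F - {x}" unfolding conv_closure_def by auto
    then show "extreme S \<F> (S - F) x" unfolding extreme_def using x by auto
  next
    assume e: "extreme S \<F> (S - F) x"
    show "insert x F \<in> \<F>"
    proof (rule ccontr)
      assume nf: "insert x F \<notin> \<F>"
      have "x \<in> conv_closure S \<F> (S - F - {x})"
        unfolding conv_closure_def
      proof
        fix D assume D: "D \<in> {D. convex S \<F> D \<and> S - F - {x} \<subseteq> D}"
        have "S - (D \<inter> (S - F)) = (S - D) \<union> F" using FS by auto
        then have "S - (D \<inter> (S - F)) \<in> \<F>" using D am_basic(5)[OF am _ F] unfolding convex_def by auto
        show "x \<in> D"
        proof (rule ccontr)
          assume "x \<notin> D"
          then have "D \<inter> (S - F) = S - F - {x}" using D by auto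
          then show False using nf eq \<open>S - (D \<inter> (S - F)) \<in> \<F>\<close> by auto
        qed
      qed
      then show False using e unfolding extreme_def by auto
    qed
  qed
qed

lemma int_char:
  assumes am: "antimatroid S \<F>" and F: "F \<in> \<F>"
  shows "conv_int S \<F> (S - F) = {x \<in> S - F. insert x F \<notin> \<F>}"
  unfolding conv_int_def using extreme_iff[OF am F] by auto

lemma fiber:
  assumes am: "antimatroid S \<F>" and F: "F \<in> \<F>"
  shows "{A \<in> Pow S. ker \<F> A = F} = (\<lambda>B. F \<union> B) ` Pow (conv_int S \<F> (S - F))"
proof -
  have FS: "F \<subseteq> S" using F am_basic(2)[OF am] by auto
  have "A \<in> Pow S \<and> ker \<F> A = F \<longleftrightarrow> F \<subseteq> A \<and> A - F \<subseteq> conv_int S \<F> (S - F)" for A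
  proof
    assume a: "A \<in> Pow S \<and> ker \<F> A = F"
    then have "F \<subseteq> A" using ker_in(2)[OF am, of A] by auto
    moreover have "insert x F \<notin> \<F>" if "x \<in> A - F" for x
    proof
      assume "insert x F \<in> \<F>"
      then have "insert x F \<subseteq> ker \<F> A" using ker_in(3)[OF am, of "insert x F" A] that \<open>F \<subseteq> A\<close> by auto
      then show False using a that by auto
    qed
    ultimately show "F \<subseteq> A \<and> A - F \<subseteq> conv_int S \<F> (S - F)" using a int_char[OF am F] by auto
  next
    assume a: "F \<subseteq> A \<and> A - F \<subseteq> conv_int S \<F> (S - F)"
    then have AS: "A \<subseteq> S" using FS unfolding conv_int_def by auto
    have "F \<subseteq> ker \<F> A" using ker_in(3)[OF am F] a by auto
    moreover have "ker \<F> A \<subseteq> F"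
    proof (rule ccontr)
      assume "\<not> ker \<F> A \<subseteq> F"
      from am_aug[OF am F ker_in(1)[OF am] this] obtain x where
        "x \<in> ker \<F> A - F" "insert x F \<in> \<F>" by auto
      then show False using a ker_in(2)[OF am, of A] int_char[OF am F] by auto
    qed
    ultimately show "A \<in> Pow S \<and> ker \<F> A = F" using AS by auto
  qed
  then show ?thesis by (auto simp: image_def)
qed

lemma pow_sum:
  fixes a :: "'b::comm_semiring_1"
  assumes "finite I"
  shows "(\<Sum>B\<in>Pow I. a ^ card B) = (a + 1) ^ card I"
proof -
  have "(\<Prod>x\<in>I. a + 1) = (\<Sum>X\<in>Pow I. (\<Prod>x\<in>X. a) * (\<Prod>x\<in>I-X. 1))"
    by (rule prod_add[OF assms])
  then show ?thesis by simp
qed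

lemma tutte_eq:
  assumes am: "antimatroid S \<F>"
  shows "tutte_poly S \<F> = (\<Sum>F\<in>\<F>. (tutte_X - 1) ^ card (S - F) * tutte_Y ^ card (conv_int S \<F> (S - F)))"
proof -
  define g where "g A = (tutte_X - 1) ^ (card S - card (ker \<F> A)) * (tutte_Y - 1) ^ (card A - card (ker \<F> A))" for A
  have fS: "finite S" using am_basic[OF am] by auto
  have "tutte_poly S \<F> = (\<Sum>A\<in>Pow S. g A)"
    unfolding tutte_poly_def g_def rank_S[OF am] by (simp add: rank_ker[OF am])
  also have "\<dots> = (\<Sum>F\<in>\<F>. \<Sum>A\<in>{A. A \<in> Pow S \<and> ker \<F> A = F}. g A)"
    by (rule sum.group[symmetric]) (use fS am_basic(7)[OF am] ker_in(1)[OF am] in auto)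
  also have "\<dots> = (\<Sum>F\<in>\<F>. (tutte_X - 1) ^ card (S - F) * tutte_Y ^ card (conv_int S \<F> (S - F)))"
  proof (rule sum.cong[OF refl])
    fix F assume F: "F \<in> \<F>"
    define I where "I = conv_int S \<F> (S - F)"
    have FS: "F \<subseteq> S" using F am_basic(2)[OF am] by auto
    have IS: "I \<subseteq> S - F" unfolding I_def conv_int_def by auto
    have fF: "finite F" using FS fS finite_subset by blast
    have fI: "finite I" using IS fS finite_subset by blast
    have inj: "inj_on (\<lambda>B. F \<union> B) (Pow I)"
      using IS by (auto simp: inj_on_def)
    have "(\<Sum>A\<in>{A. A \<in> Pow S \<and> ker \<F> A = F}. g A) = (\<Sum>B\<in>Pow I. g (F \<union> B))"
      using fiber[OF am F] sum.reindex[OF inj, of g] unfolding I_def by simp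
    also have "\<dots> = (\<Sum>B\<in>Pow I. (tutte_X - 1) ^ card (S - F) * (tutte_Y - 1) ^ card B)"
    proof (rule sum.cong[OF refl])
      fix B assume B: "B \<in> Pow I"
      have "F \<union> B \<in> {A \<in> Pow S. ker \<F> A = F}" using fiber[OF am F] B unfolding I_def by auto
      then have k: "ker \<F> (F \<union> B) = F" by auto
      have fB: "finite B" using B fI finite_subset by auto
      have "card (F \<union> B) = card F + card B" using B IS fF fB by (intro card_Un_disjoint) auto
      moreover have "card S - card F = card (S - F)" using FS fS by (simp add: card_Diff_subset fF)
      ultimately show "g (F \<union> B) = (tutte_X - 1) ^ card (S - F) * (tutte_Y - 1) ^ card B"
        unfolding g_def k by simp
    qed
    also have "\<dots> = (tutte_X - 1) ^ card (S - F) * (\<Sum>B\<in>Pow I. (tutte_Y - 1) ^ card B)"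
      by (simp add: sum_distrib_left)
    also have "\<dots> = (tutte_X - 1) ^ card (S - F) * tutte_Y ^ card I"
      using pow_sum[OF fI, of "tutte_Y - 1"] by simp
    finally show "(\<Sum>A\<in>{A. A \<in> Pow S \<and> ker \<F> A = F}. g A) = (tutte_X - 1) ^ card (S - F) * tutte_Y ^ card (conv_int S \<F> (S - F))"
      unfolding I_def .
  qed
  finally show ?thesis .
qed

lemma coeff_lin: "coeff ([:a, b:] ^ n) i = of_nat (n choose i) * b ^ i * (a::'a::comm_ring_1) ^ (n - i)"
proof (cases "i \<le> n")
  case True then show ?thesis by (rule coeff_linear_poly_power)
next
  case False
  have "degree ([:a, b:] ^ n) \<le> n" by (rule order.trans[OF degree_power_le]) auto
  then show ?thesis using False by (simp add: coeff_eq_0 binomial_eq_0)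
qed

lemma coeff_term:
  "coeff (coeff ((tutte_X - 1)^c * tutte_Y^k) i) j = (if k = j then (-1)^(c-i) * int (c choose i) else 0)"
proof -
  have X: "tutte_X - 1 = [:-1, 1:]" unfolding tutte_X_def by (simp add: poly_eq_iff coeff_monom coeff_pCons split: nat.split)
  have Y: "tutte_Y ^ k = [: monom 1 k :]" unfolding tutte_Y_def
    by (simp add: poly_const_pow monom_altdef)
  have "coeff ((tutte_X - 1)^c * tutte_Y^k) i = coeff ([:-1, 1:]^c) i * monom 1 k"
    unfolding X Y by (simp add: mult.commute[of _ "[:_:]"])
  also have "\<dots> = monom ((-1)^(c-i) * int (c choose i)) k"
    unfolding coeff_lin by (cases "even (c - i)") (simp_all add: smult_monom of_nat_poly)
  finally show ?thesis by simp
qed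

theorem lemma4p3:
  fixes S :: "'a set" and \<F> :: "'a set set" and i j :: nat
  assumes "antimatroid S \<F>"
  shows "tutte_coeff S \<F> i j =
    (\<Sum>s=i..card S. (-1) ^ (s - i) * int (s choose i) * int (count_convex S \<F> s j))"
proof -
  note am = assms
  define h where "h C = (if card (conv_int S \<F> C) = j then (-1)^(card C - i) * int (card C choose i) else 0)" for C
  define Conv where "Conv = (\<lambda>F. S - F) ` \<F>"
  have fS: "finite S" using am_basic[OF am] by auto
  have fC: "finite Conv" unfolding Conv_def using am_basic(7)[OF am] by simp
  have inj: "inj_on (\<lambda>F. S - F) \<F>"
  proof (rule inj_onI)
    fix F1 F2 assume "F1 \<in> \<F>" "F2 \<in> \<F>" "S - F1 = S - F2"
    moreover have "F1 \<subseteq> S" "F2 \<subseteq> S" using am_basic(2)[OF am] calculation by auto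
    ultimately show "F1 = F2" by (metis Diff_Diff_Int inf.absorb2)
  qed
  have convex_iff: "convex S \<F> C \<longleftrightarrow> C \<in> Conv" for C
    unfolding convex_def Conv_def
  proof
    assume "C \<subseteq> S \<and> S - C \<in> \<F>" then show "C \<in> (\<lambda>F. S - F) ` \<F>"
      by (intro image_eqI[of _ _ "S - C"]) auto
  next
    assume "C \<in> (\<lambda>F. S - F) ` \<F>"
    then obtain F where F: "F \<in> \<F>" "C = S - F" by auto
    then have "F \<subseteq> S" using am_basic(2)[OF am] by auto
    then have "S - C = F" using F(2) by auto
    then show "C \<subseteq> S \<and> S - C \<in> \<F>" using F by auto
  qed
  have cardle: "C \<in> Conv \<Longrightarrow> card C \<le> card S" for C
    unfolding Conv_def using fS by (auto intro: card_mono)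
  have "tutte_coeff S \<F> i j = (\<Sum>F\<in>\<F>. h (S - F))"
    unfolding tutte_coeff_def tutte_eq[OF am] coeff_sum coeff_term h_def by simp
  also have "\<dots> = (\<Sum>C\<in>Conv. h C)"
    unfolding Conv_def by (simp add: sum.reindex[OF inj])
  also have "\<dots> = (\<Sum>C\<in>{C\<in>Conv. i \<le> card C}. h C)"
    by (rule sum.mono_neutral_right) (use fC in \<open>auto simp: h_def binomial_eq_0\<close>)
  also have "\<dots> = (\<Sum>s\<in>{i..card S}. \<Sum>C\<in>{C. C \<in> {C\<in>Conv. i \<le> card C} \<and> card C = s}. h C)"
    by (rule sum.group[symmetric]) (use fC cardle in auto)
  also have "\<dots> = (\<Sum>s=i..card S. (-1) ^ (s - i) * int (s choose i) * int (count_convex S \<F> s j))"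
  proof (rule sum.cong[OF refl])
    fix s assume s: "s \<in> {i..card S}"
    have "(\<Sum>C\<in>{C. C \<in> {C\<in>Conv. i \<le> card C} \<and> card C = s}. h C)
        = (\<Sum>C\<in>{C\<in>Conv. card C = s}. if card (conv_int S \<F> C) = j then (-1) ^ (s - i) * int (s choose i) else 0)"
      using s by (intro sum.cong) (auto simp: h_def)
    also have "\<dots> = (\<Sum>C\<in>{C\<in>Conv. card C = s \<and> card (conv_int S \<F> C) = j}. (-1) ^ (s - i) * int (s choose i))"
      using fC by (subst sum.inter_filter[symmetric]) (auto intro: sum.cong)
    also have "\<dots> = (-1) ^ (s - i) * int (s choose i) * int (card {C\<in>Conv. card C = s \<and> card (conv_int S \<F> C) = j})"
      by simp
    also have "{C\<in>Conv. card C = s \<and> card (conv_int S \<F> C) = j} = {C. convex S \<F> C \<and> card C = s \<and> card (conv_int S \<F> C) = j}"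
      using convex_iff by auto
    finally show "(\<Sum>C\<in>{C. C \<in> {C\<in>Conv. i \<le> card C} \<and> card C = s}. h C) = (-1) ^ (s - i) * int (s choose i) * int (count_convex S \<F> s j)"
      unfolding count_convex_def .
  qed
  finally show ?thesis .
qed

end
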